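(* Let $K$ be a square with edges parallel to the coordinate axes and $k\ge1$ an integer. Let $V(K)=\mathcal Q_k(K)$, $\bm W(K)=[\mathcal Q_k(K)]^2$, and $\bm M(\partial K)=\{\bm\mu:\bm\mu|_F=\bm n\times p_k\text{ for some }p_k\in\mathcal P_k(F),\text{ for each edge }F\subset\partial K\}$. Then $I_M(V(K)\times\bm W(K))=2$.
   Context: $\mathcal Q_k$ denotes polynomials in two variables of degree at most $k$ in each variable; $\mathcal P_k(F)$ polynomials of degree at most $k$ on the edge $F$. Conventions in 2D: $\nabla\times\bm v=-\partial_yv_1+\partial_xv_2$, $\nabla\times p=(\partial_yp,-\partial_xp)^T$, $\bm n\times\bm v=-n_2v_1+n_1v_2$, $\bm n\times p=(n_2p,-n_1p)^T$, $\bm n\times\bm w\times\bm n:=\bm w-(\bm w\cdot\bm n)\bm n$, $\bm n$ the unit outward normal. $I_M(V(K)\times\bm W(K)):=\dim\bm M(\partial K)-\dim\{\bm n\times v|_{\partial K}:v\in V(K),\nabla\times v=\bm0\}-\dim\{\bm n\times\bm w\times\bm n|_{\partial K}:\bm w\in\bm W(K),\nabla\times\bm w=0\}$. *)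

theory Defs
  imports "HOL-Analysis.Analysis" "HOL-Library.Function_Algebras"
begin

definition fscale :: "real \<Rightarrow> ('a \<Rightarrow> 'b::real_vector) \<Rightarrow> ('a \<Rightarrow> 'b)" where
  "fscale c f = (\<lambda>x. c *\<^sub>R f x)"

lemma vector_space_fscale: "vector_space (fscale :: real \<Rightarrow> ('a \<Rightarrow> 'b::real_vector) \<Rightarrow> _)"
  by unfold_locales (auto simp: fscale_def fun_eq_iff scaleR_add_right scaleR_add_left)

abbreviation fdim :: "('a \<Rightarrow> 'b::real_vector) set \<Rightarrow> nat" where
  "fdim S \<equiv> vector_space.dim fscale S"

definition Qk :: "nat \<Rightarrow> (real \<times> real \<Rightarrow> real) set" where
  "Qk k = {f. \<exists>c :: nat \<Rightarrow> nat \<Rightarrow> real. \<forall>x y.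
              f (x, y) = (\<Sum>i\<le>k. \<Sum>j\<le>k. c i j * x ^ i * y ^ j)}"

definition Qk2 :: "nat \<Rightarrow> (real \<times> real \<Rightarrow> real \<times> real) set" where
  "Qk2 k = {w. (fst \<circ> w) \<in> Qk k \<and> (snd \<circ> w) \<in> Qk k}"

definition square :: "real \<Rightarrow> real \<Rightarrow> real \<Rightarrow> (real \<times> real) set" where
  "square a b h = {(x, y). a \<le> x \<and> x \<le> a + h \<and> b \<le> y \<and> y \<le> b + h}"

text \<open>Edges numbered 0 (bottom), 1 (right), 2 (top), 3 (left).\<close>
definition edge :: "real \<Rightarrow> real \<Rightarrow> real \<Rightarrow> nat \<Rightarrow> (real \<times> real) set" where
  "edge a b h i =
     (if i = 0 then {(x, y). a \<le> x \<and> x \<le> a + h \<and> y = b}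
      else if i = 1 then {(x, y). x = a + h \<and> b \<le> y \<and> y \<le> b + h}
      else if i = 2 then {(x, y). a \<le> x \<and> x \<le> a + h \<and> y = b + h}
      else if i = 3 then {(x, y). x = a \<and> b \<le> y \<and> y \<le> b + h}
      else {})"

definition normal :: "nat \<Rightarrow> real \<times> real" where
  "normal i = (if i = 0 then (0, -1) else if i = 1 then (1, 0)
               else if i = 2 then (0, 1) else (-1, 0))"

text \<open>P_k(F_i): polynomials of degree at most k on edge i (in the coordinate
  varying along the edge).\<close>
definition Pk_edge :: "nat \<Rightarrow> nat \<Rightarrow> (real \<times> real \<Rightarrow> real) set" where
  "Pk_edge k i = {p. \<exists>c :: nat \<Rightarrow> real. \<forall>x y.
       p (x, y) = (\<Sum>j\<le>k. c j * (if even i then x else y) ^ j)}"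

definition dx :: "(real \<times> real \<Rightarrow> real) \<Rightarrow> real \<times> real \<Rightarrow> real" where
  "dx f p = deriv (\<lambda>t. f (t, snd p)) (fst p)"

definition dy :: "(real \<times> real \<Rightarrow> real) \<Rightarrow> real \<times> real \<Rightarrow> real" where
  "dy f p = deriv (\<lambda>t. f (fst p, t)) (snd p)"

definition curl_s :: "(real \<times> real \<Rightarrow> real) \<Rightarrow> real \<times> real \<Rightarrow> real \<times> real" where
  "curl_s v p = (dy v p, - dx v p)"

definition curl_v :: "(real \<times> real \<Rightarrow> real \<times> real) \<Rightarrow> real \<times> real \<Rightarrow> real" where
  "curl_v w p = - dy (fst \<circ> w) p + dx (snd \<circ> w) p"

text \<open>n x p = (n2 p, - n1 p) for scalar p\<close>
definition ncross_s :: "real \<times> real \<Rightarrow> real \<Rightarrow> real \<times> real" where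
  "ncross_s n q = (snd n * q, - fst n * q)"

text \<open>n x w x n = w - (w . n) n\<close>
definition ntan :: "real \<times> real \<Rightarrow> real \<times> real \<Rightarrow> real \<times> real" where
  "ntan n w = w - (fst w * fst n + snd w * snd n) *\<^sub>R n"

text \<open>A field on the boundary is represented edge by edge: mu (i, p) is the value on
  edge i at the point p of that edge; it is 0 outside (i < 4, p in edge i).\<close>
definition bd_trace :: "real \<Rightarrow> real \<Rightarrow> real \<Rightarrow> (nat \<Rightarrow> real \<times> real \<Rightarrow> real \<times> real)
     \<Rightarrow> (nat \<times> (real \<times> real) \<Rightarrow> real \<times> real)" where
  "bd_trace a b h g = (\<lambda>(i, p). if i < 4 \<and> p \<in> edge a b h i then g i p else 0)"

definition Mspace :: "nat \<Rightarrow> real \<Rightarrow> real \<Rightarrow> real \<Rightarrow> (nat \<times> (real \<times> real) \<Rightarrow> real \<times> real) set" where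
  "Mspace k a b h = {mu. (\<forall>i p. \<not> (i < 4 \<and> p \<in> edge a b h i) \<longrightarrow> mu (i, p) = 0) \<and>
      (\<forall>i<4. \<exists>q \<in> Pk_edge k i. \<forall>p \<in> edge a b h i. mu (i, p) = ncross_s (normal i) (q p))}"

definition Vtraces :: "nat \<Rightarrow> real \<Rightarrow> real \<Rightarrow> real \<Rightarrow> (nat \<times> (real \<times> real) \<Rightarrow> real \<times> real) set" where
  "Vtraces k a b h = {bd_trace a b h (\<lambda>i p. ncross_s (normal i) (v p)) | v.
      v \<in> Qk k \<and> (\<forall>p \<in> square a b h. curl_s v p = 0)}"

definition Wtraces :: "nat \<Rightarrow> real \<Rightarrow> real \<Rightarrow> real \<Rightarrow> (nat \<times> (real \<times> real) \<Rightarrow> real \<times> real) set" where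
  "Wtraces k a b h = {bd_trace a b h (\<lambda>i p. ntan (normal i) (w p)) | w.
      w \<in> Qk2 k \<and> (\<forall>p \<in> square a b h. curl_v w p = 0)}"

definition I_M :: "nat \<Rightarrow> real \<Rightarrow> real \<Rightarrow> real \<Rightarrow> int" where
  "I_M k a b h = int (fdim (Mspace k a b h)) - int (fdim (Vtraces k a b h))
                 - int (fdim (Wtraces k a b h))"

end

theory Submission
  imports Defs
begin

subsection \<open>Univariate polynomial facts\<close>

lemma poly1_zero:
  fixes c :: "nat \<Rightarrow> real"
  assumes h: "h > 0" and z: "\<forall>s\<in>{0..h}. (\<Sum>i\<le>n. c i * s ^ i) = 0"
  shows "\<forall>i\<le>n. c i = 0"
proof (rule ccontr)
  assume "\<not> (\<forall>i\<le>n. c i = 0)"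
  then have "finite {z. (\<Sum>i\<le>n. c i * z^i) = 0}"
    using polyfun_finite_roots[of c n] by auto
  moreover have "{0..h} \<subseteq> {z. (\<Sum>i\<le>n. c i * z^i) = 0}" using z by auto
  moreover have "infinite {0..h}" using h by simp
  ultimately show False using finite_subset by blast
qed

lemma poly2_zero:
  fixes c :: "nat \<Rightarrow> nat \<Rightarrow> real"
  assumes h: "h > 0"
    and z: "\<forall>s\<in>{0..h}. \<forall>t\<in>{0..h}. (\<Sum>i\<le>n. \<Sum>j\<le>n. c i j * s ^ i * t ^ j) = 0"
  shows "\<forall>i\<le>n. \<forall>j\<le>n. c i j = 0"
proof -
  have A: "\<forall>i\<le>n. (\<Sum>j\<le>n. c i j * t ^ j) = 0" if t: "t \<in> {0..h}" for t
  proof -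
    have "\<forall>s\<in>{0..h}. (\<Sum>i\<le>n. (\<Sum>j\<le>n. c i j * t ^ j) * s ^ i) = 0"
    proof
      fix s assume "s \<in> {0..h}"
      then have "(\<Sum>i\<le>n. \<Sum>j\<le>n. c i j * s ^ i * t ^ j) = 0" using z t by auto
      moreover have "(\<Sum>i\<le>n. (\<Sum>j\<le>n. c i j * t ^ j) * s ^ i) = (\<Sum>i\<le>n. \<Sum>j\<le>n. c i j * s ^ i * t ^ j)"
        by (simp add: sum_distrib_left sum_distrib_right mult_ac)
      ultimately show "(\<Sum>i\<le>n. (\<Sum>j\<le>n. c i j * t ^ j) * s ^ i) = 0" by simp
    qed
    from poly1_zero[OF h this] show ?thesis .
  qed
  show ?thesis
  proof (intro allI impI)
    fix i j assume i: "i \<le> n" and j: "j \<le> n"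
    have "\<forall>t\<in>{0..h}. (\<Sum>j\<le>n. c i j * t ^ j) = 0" using A i by blast
    from poly1_zero[OF h this] j show "c i j = 0" by blast
  qed
qed

lemma poly1_shift:
  fixes c :: "nat \<Rightarrow> real"
  shows "\<exists>d. \<forall>x. (\<Sum>i\<le>k. c i * (x + s) ^ i) = (\<Sum>i\<le>k. d i * x ^ i)"
proof -
  define p :: "real poly" where "p = (\<Sum>i\<le>k. monom (c i) i)"
  define q where "q = pcompose p [:s, 1:]"
  have dp: "degree p \<le> k" unfolding p_def
    by (rule degree_sum_le) (auto simp: degree_monom_le intro: order.trans[OF degree_monom_le])
  have dq: "degree q \<le> k" unfolding q_def using dp by (simp add: degree_pcompose)
  have "(\<Sum>i\<le>k. c i * (x + s) ^ i) = (\<Sum>i\<le>k. coeff q i * x ^ i)" for x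
  proof -
    have "(\<Sum>i\<le>k. c i * (x + s) ^ i) = poly p (x + s)"
      by (simp add: p_def poly_sum poly_monom)
    also have "\<dots> = poly q x" by (simp add: q_def poly_pcompose add.commute)
    also have "\<dots> = poly (\<Sum>i\<le>k. monom (coeff q i) i) x"
      using poly_as_sum_of_monoms'[OF dq] by simp
    also have "\<dots> = (\<Sum>i\<le>k. coeff q i * x ^ i)" by (simp add: poly_sum poly_monom)
    finally show ?thesis .
  qed
  then show ?thesis by blast
qed


lemma rep_shift:
  fixes c :: "nat \<Rightarrow> nat \<Rightarrow> real"
  assumes f: "\<forall>x y. f (x, y) = (\<Sum>i\<le>k. \<Sum>j\<le>k. c i j * (x - a) ^ i * (y - b) ^ j)"
  shows "\<exists>e. \<forall>x y. f (x, y) = (\<Sum>i\<le>k. \<Sum>j\<le>k. e i j * (x - a') ^ i * (y - b') ^ j)"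
proof -
  have "\<forall>i. \<exists>d. \<forall>y. (\<Sum>j\<le>k. c i j * (y + (b' - b)) ^ j) = (\<Sum>j\<le>k. d j * y ^ j)"
    by (intro allI) (rule poly1_shift)
  then obtain d where d: "\<And>i y. (\<Sum>j\<le>k. c i j * (y + (b' - b)) ^ j) = (\<Sum>j\<le>k. d i j * y ^ j)"
    by metis
  have "\<forall>j. \<exists>e. \<forall>x. (\<Sum>i\<le>k. d i j * (x + (a' - a)) ^ i) = (\<Sum>i\<le>k. e i * x ^ i)"
    by (intro allI) (rule poly1_shift)
  then obtain e where e: "\<And>j x. (\<Sum>i\<le>k. d i j * (x + (a' - a)) ^ i) = (\<Sum>i\<le>k. e j i * x ^ i)"
    by metis
  have "f (x, y) = (\<Sum>i\<le>k. \<Sum>j\<le>k. e j i * (x - a') ^ i * (y - b') ^ j)" for x y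
  proof -
    have "f (x, y) = (\<Sum>i\<le>k. (x - a) ^ i * (\<Sum>j\<le>k. c i j * ((y - b') + (b' - b)) ^ j))"
      using f by (simp add: sum_distrib_left mult_ac)
    also have "\<dots> = (\<Sum>i\<le>k. (x - a) ^ i * (\<Sum>j\<le>k. d i j * (y - b') ^ j))"
      by (simp only: d)
    also have "\<dots> = (\<Sum>i\<le>k. \<Sum>j\<le>k. d i j * (x - a) ^ i * (y - b') ^ j)"
      by (simp add: sum_distrib_left mult_ac)
    also have "\<dots> = (\<Sum>j\<le>k. \<Sum>i\<le>k. d i j * (x - a) ^ i * (y - b') ^ j)"
      by (rule sum.swap)
    also have "\<dots> = (\<Sum>j\<le>k. (y - b') ^ j * (\<Sum>i\<le>k. d i j * ((x - a') + (a' - a)) ^ i))"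
      by (simp add: sum_distrib_left mult_ac)
    also have "\<dots> = (\<Sum>j\<le>k. (y - b') ^ j * (\<Sum>i\<le>k. e j i * (x - a') ^ i))"
      by (simp only: e)
    also have "\<dots> = (\<Sum>j\<le>k. \<Sum>i\<le>k. e j i * (x - a') ^ i * (y - b') ^ j)"
      by (simp add: sum_distrib_left mult_ac)
    also have "\<dots> = (\<Sum>i\<le>k. \<Sum>j\<le>k. e j i * (x - a') ^ i * (y - b') ^ j)"
      by (rule sum.swap)
    finally show ?thesis .
  qed
  then show ?thesis by (intro exI[where x="\<lambda>i j. e j i"]) blast
qed

lemma Qk_shift:
  "f \<in> Qk k \<longleftrightarrow> (\<exists>c. \<forall>x y. f (x, y) = (\<Sum>i\<le>k. \<Sum>j\<le>k. c i j * (x - a) ^ i * (y - b) ^ j))"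
proof
  assume "f \<in> Qk k"
  then obtain c where "\<forall>x y. f (x, y) = (\<Sum>i\<le>k. \<Sum>j\<le>k. c i j * (x - 0) ^ i * (y - 0) ^ j)"
    by (auto simp: Qk_def)
  from rep_shift[OF this] show "\<exists>c. \<forall>x y. f (x, y) = (\<Sum>i\<le>k. \<Sum>j\<le>k. c i j * (x - a) ^ i * (y - b) ^ j)" .
next
  assume "\<exists>c. \<forall>x y. f (x, y) = (\<Sum>i\<le>k. \<Sum>j\<le>k. c i j * (x - a) ^ i * (y - b) ^ j)"
  then obtain c where "\<forall>x y. f (x, y) = (\<Sum>i\<le>k. \<Sum>j\<le>k. c i j * (x - a) ^ i * (y - b) ^ j)" by blast
  from rep_shift[OF this, of 0 0] show "f \<in> Qk k" by (auto simp: Qk_def)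
qed

lemma Qk_masked:
  assumes "f \<in> Qk k"
  shows "\<exists>c. (\<forall>i j. k < i \<or> k < j \<longrightarrow> c i j = 0) \<and>
           (\<forall>x y. f (x, y) = (\<Sum>i\<le>k. \<Sum>j\<le>k. c i j * (x - a) ^ i * (y - b) ^ j))"
proof -
  obtain c where c: "\<forall>x y. f (x, y) = (\<Sum>i\<le>k. \<Sum>j\<le>k. c i j * (x - a) ^ i * (y - b) ^ j)"
    using assms Qk_shift by blast
  define c' where "c' i j = (if i \<le> k \<and> j \<le> k then c i j else 0)" for i j
  have "\<forall>x y. f (x, y) = (\<Sum>i\<le>k. \<Sum>j\<le>k. c' i j * (x - a) ^ i * (y - b) ^ j)"
    using c by (simp add: c'_def)
  moreover have "\<forall>i j. k < i \<or> k < j \<longrightarrow> c' i j = 0" by (auto simp: c'_def)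
  ultimately show ?thesis by blast
qed

lemma Qk_mono:
  assumes "c = 0 \<or> (m \<le> k \<and> n \<le> k)"
  shows "(\<lambda>p. c * (fst p - a) ^ m * (snd p - b) ^ n) \<in> Qk k"
proof -
  define e where "e i j = (if i = m then (if j = n then c else 0) else 0)" for i j
  have "\<forall>x y. c * (x - a) ^ m * (y - b) ^ n = (\<Sum>i\<le>k. \<Sum>j\<le>k. e i j * (x - a) ^ i * (y - b) ^ j)"
  proof (intro allI)
    fix x y
    have inner: "(\<Sum>j\<le>k. e i j * (x - a) ^ i * (y - b) ^ j) = (if i = m then c * (x - a) ^ m * (y - b) ^ n else 0)" for i
    proof (cases "i = m")
      case True
      have "(\<Sum>j\<le>k. e i j * (x - a) ^ i * (y - b) ^ j) = (\<Sum>j\<le>k. if j = n then c * (x - a) ^ m * (y - b) ^ n else 0)"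
        by (rule sum.cong) (auto simp: e_def True)
      also have "\<dots> = (if i = m then c * (x - a) ^ m * (y - b) ^ n else 0)"
        using assms True by (cases "c = 0") (auto simp: sum.delta)
      finally show ?thesis .
    qed (simp add: e_def)
    have "(\<Sum>i\<le>k. \<Sum>j\<le>k. e i j * (x - a) ^ i * (y - b) ^ j) = (\<Sum>i\<le>k. if i = m then c * (x - a) ^ m * (y - b) ^ n else 0)"
      by (simp only: inner)
    also have "\<dots> = c * (x - a) ^ m * (y - b) ^ n"
      using assms by (cases "c = 0") (auto simp: sum.delta)
    finally show "c * (x - a) ^ m * (y - b) ^ n = (\<Sum>i\<le>k. \<Sum>j\<le>k. e i j * (x - a) ^ i * (y - b) ^ j)" by simp
  qed
  then show ?thesis by (subst Qk_shift[of _ _ a b]) auto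
qed

lemma Pk_edge_shift:
  "q \<in> Pk_edge k i \<longleftrightarrow> (\<exists>c. \<forall>x y. q (x, y) = (\<Sum>j\<le>k. c j * ((if even i then x else y) - tt) ^ j))"
proof
  assume "q \<in> Pk_edge k i"
  then obtain c where c: "\<forall>x y. q (x, y) = (\<Sum>j\<le>k. c j * (if even i then x else y) ^ j)"
    by (auto simp: Pk_edge_def)
  obtain d where d: "\<forall>x. (\<Sum>j\<le>k. c j * (x + tt) ^ j) = (\<Sum>j\<le>k. d j * x ^ j)"
    using poly1_shift by blast
  have "q (x, y) = (\<Sum>j\<le>k. d j * ((if even i then x else y) - tt) ^ j)" for x y
    using c d[rule_format, of "(if even i then x else y) - tt"] by simp
  then show "\<exists>c. \<forall>x y. q (x, y) = (\<Sum>j\<le>k. c j * ((if even i then x else y) - tt) ^ j)" by blast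
next
  assume "\<exists>c. \<forall>x y. q (x, y) = (\<Sum>j\<le>k. c j * ((if even i then x else y) - tt) ^ j)"
  then obtain c where c: "\<forall>x y. q (x, y) = (\<Sum>j\<le>k. c j * ((if even i then x else y) - tt) ^ j)" by blast
  obtain d where d: "\<forall>x. (\<Sum>j\<le>k. c j * (x + (-tt)) ^ j) = (\<Sum>j\<le>k. d j * x ^ j)"
    using poly1_shift by blast
  have "q (x, y) = (\<Sum>j\<le>k. d j * (if even i then x else y) ^ j)" for x y
    using c d[rule_format, of "(if even i then x else y)"] by simp
  then show "q \<in> Pk_edge k i" by (auto simp: Pk_edge_def)
qed


lemma deriv_poly1:
  fixes d :: "nat \<Rightarrow> real"
  shows "deriv (\<lambda>t. \<Sum>i\<le>k. d i * (t - a) ^ i) x = (\<Sum>i\<le>k. d i * (of_nat i * (x - a) ^ (i - 1)))"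
proof (rule DERIV_imp_deriv)
  show "((\<lambda>t. \<Sum>i\<le>k. d i * (t - a) ^ i) has_real_derivative (\<Sum>i\<le>k. d i * (of_nat i * (x - a) ^ (i - 1)))) (at x)"
    by (auto intro!: derivative_eq_intros sum.cong simp: mult_ac)
qed

lemma sum_deriv_shift:
  fixes d :: "nat \<Rightarrow> real"
  assumes "d (Suc k) = 0"
  shows "(\<Sum>i\<le>k. d i * (of_nat i * z ^ (i - 1))) = (\<Sum>i\<le>k. d (Suc i) * (of_nat (Suc i) * z ^ i))"
proof (cases k)
  case 0
  then show ?thesis using assms by simp
next
  case (Suc k')
  have "(\<Sum>i\<le>k. d i * (of_nat i * z ^ (i - 1))) = (\<Sum>i\<le>k'. d (Suc i) * (of_nat (Suc i) * z ^ i))"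
    unfolding Suc by (subst sum.atMost_Suc_shift) simp
  also have "\<dots> = (\<Sum>i\<le>k. d (Suc i) * (of_nat (Suc i) * z ^ i))"
    using assms unfolding Suc by simp
  finally show ?thesis .
qed

lemma dx_rep:
  fixes c :: "nat \<Rightarrow> nat \<Rightarrow> real"
  assumes m: "\<forall>i j. k < i \<or> k < j \<longrightarrow> c i j = 0"
    and f: "\<forall>x y. f (x, y) = (\<Sum>i\<le>k. \<Sum>j\<le>k. c i j * (x - a) ^ i * (y - b) ^ j)"
  shows "dx f (x, y) = (\<Sum>i\<le>k. \<Sum>j\<le>k. (of_nat (Suc i) * c (Suc i) j) * (x - a) ^ i * (y - b) ^ j)"
proof -
  define d where "d i = (\<Sum>j\<le>k. c i j * (y - b) ^ j)" for i
  have fe: "(\<lambda>t. f (t, y)) = (\<lambda>t. \<Sum>i\<le>k. d i * (t - a) ^ i)"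
    using f by (intro ext) (simp add: d_def sum_distrib_left mult_ac)
  have d0: "d (Suc k) = 0" using m by (simp add: d_def)
  have "dx f (x, y) = (\<Sum>i\<le>k. d i * (of_nat i * (x - a) ^ (i - 1)))"
    by (simp add: dx_def fe deriv_poly1)
  also have "\<dots> = (\<Sum>i\<le>k. d (Suc i) * (of_nat (Suc i) * (x - a) ^ i))"
    using d0 by (rule sum_deriv_shift)
  also have "\<dots> = (\<Sum>i\<le>k. \<Sum>j\<le>k. (of_nat (Suc i) * c (Suc i) j) * (x - a) ^ i * (y - b) ^ j)"
    by (simp add: d_def sum_distrib_right sum_distrib_left mult_ac)
  finally show ?thesis .
qed

lemma dy_rep:
  fixes c :: "nat \<Rightarrow> nat \<Rightarrow> real"
  assumes m: "\<forall>i j. k < i \<or> k < j \<longrightarrow> c i j = 0"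
    and f: "\<forall>x y. f (x, y) = (\<Sum>i\<le>k. \<Sum>j\<le>k. c i j * (x - a) ^ i * (y - b) ^ j)"
  shows "dy f (x, y) = (\<Sum>i\<le>k. \<Sum>j\<le>k. (of_nat (Suc j) * c i (Suc j)) * (x - a) ^ i * (y - b) ^ j)"
proof -
  define d where "d j = (\<Sum>i\<le>k. c i j * (x - a) ^ i)" for j
  have fe: "(\<lambda>t. f (x, t)) = (\<lambda>t. \<Sum>j\<le>k. d j * (t - b) ^ j)"
  proof (rule ext)
    fix t
    have "f (x, t) = (\<Sum>i\<le>k. \<Sum>j\<le>k. c i j * (x - a) ^ i * (t - b) ^ j)" using f by simp
    also have "\<dots> = (\<Sum>j\<le>k. \<Sum>i\<le>k. c i j * (x - a) ^ i * (t - b) ^ j)" by (rule sum.swap)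
    also have "\<dots> = (\<Sum>j\<le>k. d j * (t - b) ^ j)" by (simp add: d_def sum_distrib_right)
    finally show "f (x, t) = (\<Sum>j\<le>k. d j * (t - b) ^ j)" .
  qed
  have d0: "d (Suc k) = 0" using m by (simp add: d_def)
  have "dy f (x, y) = (\<Sum>j\<le>k. d j * (of_nat j * (y - b) ^ (j - 1)))"
    by (simp add: dy_def fe deriv_poly1)
  also have "\<dots> = (\<Sum>j\<le>k. d (Suc j) * (of_nat (Suc j) * (y - b) ^ j))"
    using d0 by (rule sum_deriv_shift)
  also have "\<dots> = (\<Sum>i\<le>k. \<Sum>j\<le>k. (of_nat (Suc j) * c i (Suc j)) * (x - a) ^ i * (y - b) ^ j)"
  proof -
    have "(\<Sum>j\<le>k. d (Suc j) * (of_nat (Suc j) * (y - b) ^ j)) = (\<Sum>j\<le>k. \<Sum>i\<le>k. (of_nat (Suc j) * c i (Suc j)) * (x - a) ^ i * (y - b) ^ j)"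
      by (simp add: d_def sum_distrib_right sum_distrib_left mult_ac)
    also have "\<dots> = (\<Sum>i\<le>k. \<Sum>j\<le>k. (of_nat (Suc j) * c i (Suc j)) * (x - a) ^ i * (y - b) ^ j)"
      by (rule sum.swap)
    finally show ?thesis .
  qed
  finally show ?thesis .
qed


global_interpretation fsv: vector_space "fscale :: real \<Rightarrow> ('a \<Rightarrow> 'b::real_vector) \<Rightarrow> _"
  by (rule vector_space_fscale)

lemma sum_fun_apply: "(\<Sum>l\<in>L. F l) x = (\<Sum>l\<in>L. F l x)"
  by (induction L rule: infinite_finite_induct) auto

lemma fscale_apply: "fscale c f x = c *\<^sub>R f x"
  by (simp add: fscale_def)

definition coordo :: "real \<Rightarrow> real \<Rightarrow> nat \<Rightarrow> real \<times> real \<Rightarrow> real" where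
  "coordo a b i p = (if even i then fst p - a else snd p - b)"

definition EF :: "nat \<Rightarrow> real \<Rightarrow> real \<Rightarrow> real \<Rightarrow> (nat \<Rightarrow> nat \<Rightarrow> real) \<Rightarrow> (nat \<times> (real \<times> real) \<Rightarrow> real \<times> real)" where
  "EF k a b h P = bd_trace a b h (\<lambda>i p. ncross_s (normal i) (\<Sum>j\<le>k. P i j * coordo a b i p ^ j))"

lemma ncross_s_eq: "ncross_s n q = q *\<^sub>R (snd n, - fst n)"
  by (simp add: ncross_s_def)

lemma ncross_s_sum:
  "ncross_s n (\<Sum>l\<in>L. c l * q l) = (\<Sum>l\<in>L. c l *\<^sub>R ncross_s n (q l))"
  by (simp only: ncross_s_eq scaleR_sum_left scaleR_scaleR)

lemma EF_lin:
  assumes "finite L"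
  shows "EF k a b h (\<lambda>i j. \<Sum>l\<in>L. c l * F l i j) = (\<Sum>l\<in>L. fscale (c l) (EF k a b h (F l)))"
proof (rule ext, clarify)
  fix i p
  show "EF k a b h (\<lambda>i j. \<Sum>l\<in>L. c l * F l i j) (i, p) = (\<Sum>l\<in>L. fscale (c l) (EF k a b h (F l))) (i, p)"
  proof (cases "i < 4 \<and> p \<in> edge a b h i")
    case True
    have "(\<Sum>j\<le>k. (\<Sum>l\<in>L. c l * F l i j) * coordo a b i p ^ j)
        = (\<Sum>l\<in>L. c l * (\<Sum>j\<le>k. F l i j * coordo a b i p ^ j))"
      by (simp add: sum_distrib_right sum_distrib_left mult_ac sum.swap[of _ L])
    note eq = this
    show ?thesis using True
      by (simp add: EF_def bd_trace_def sum_fun_apply fscale_apply eq ncross_s_sum[where L=L])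
  next
    case False
    then have "bd_trace a b h g (i, p) = 0" for g by (auto simp: bd_trace_def)
    then show ?thesis
      by (simp add: EF_def sum_fun_apply fscale_apply)
  qed
qed

lemma EF_cong:
  assumes "\<forall>i<4. \<forall>j\<le>k. P i j = Q i j"
  shows "EF k a b h P = EF k a b h Q"
  using assms by (auto simp: EF_def bd_trace_def fun_eq_iff intro!: sum.cong)

definition ept :: "real \<Rightarrow> real \<Rightarrow> real \<Rightarrow> nat \<Rightarrow> real \<Rightarrow> real \<times> real" where
  "ept a b h i s = (if i = 0 then (a + s, b) else if i = 1 then (a + h, b + s)
                    else if i = 2 then (a + s, b + h) else (a, b + s))"

lemma ept_edge:
  assumes "i < 4" "0 \<le> s" "s \<le> h"
  shows "ept a b h i s \<in> edge a b h i" "coordo a b i (ept a b h i s) = s"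
proof -
  have "i = 0 \<or> i = 1 \<or> i = 2 \<or> i = 3" using assms(1) by auto
  then show "ept a b h i s \<in> edge a b h i" "coordo a b i (ept a b h i s) = s"
    using assms by (auto simp: ept_def edge_def coordo_def)
qed

lemma normal_vec_nz: "(snd (normal i), - fst (normal i)) \<noteq> (0::real \<times> real)"
  by (auto simp: normal_def zero_prod_def)

lemma EF_zero:
  assumes h: "h > 0" and z: "EF k a b h P = 0"
  shows "\<forall>i<4. \<forall>j\<le>k. P i j = 0"
proof (intro allI impI)
  fix i j :: nat assume i: "i < 4" and j: "j \<le> k"
  have "\<forall>s\<in>{0..h}. (\<Sum>j\<le>k. P i j * s ^ j) = 0"
  proof
    fix s assume s: "s \<in> {0..h}"
    have "EF k a b h P (i, ept a b h i s) = 0" using z by simp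
    then have "(\<Sum>j\<le>k. P i j * s ^ j) *\<^sub>R (snd (normal i), - fst (normal i)) = 0"
      using ept_edge[OF i, of s h a b] s
      by (simp add: EF_def bd_trace_def ncross_s_eq i)
    then show "(\<Sum>j\<le>k. P i j * s ^ j) = 0" using normal_vec_nz[of i] scaleR_eq_0_iff by blast
  qed
  from poly1_zero[OF h this] j show "P i j = 0" by blast
qed


lemma EF_comb_zero:
  assumes h: "h > 0" and L: "finite L"
    and indep: "\<forall>c. (\<forall>i<4. \<forall>j\<le>k. (\<Sum>l\<in>L. c l * F l i j) = 0) \<longrightarrow> (\<forall>l\<in>L. c l = 0)"
    and z: "(\<Sum>l\<in>L. fscale (c l) (EF k a b h (F l))) = 0"
  shows "\<forall>l\<in>L. c l = 0"
proof -
  have "EF k a b h (\<lambda>i j. \<Sum>l\<in>L. c l * F l i j) = 0" using z EF_lin[OF L] by simp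
  from EF_zero[OF h this] indep show ?thesis by blast
qed

lemma dim_EF:
  assumes h: "h > 0" and L: "finite L"
    and indep: "\<forall>c. (\<forall>i<4. \<forall>j\<le>k. (\<Sum>l\<in>L. c l * F l i j) = 0) \<longrightarrow> (\<forall>l\<in>L. c l = 0)"
    and sub: "(\<lambda>l. EF k a b h (F l)) ` L \<subseteq> S"
    and sp: "\<forall>\<mu>\<in>S. \<exists>c. \<mu> = EF k a b h (\<lambda>i j. \<Sum>l\<in>L. c l * F l i j)"
  shows "fdim S = card L"
proof -
  define B where "B = (\<lambda>l. EF k a b h (F l)) ` L"
  have inj: "inj_on (\<lambda>l. EF k a b h (F l)) L"
  proof (rule inj_onI, rule ccontr)
    fix l1 l2 assume l1: "l1 \<in> L" and l2: "l2 \<in> L" and e: "EF k a b h (F l1) = EF k a b h (F l2)"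
      and ne: "l1 \<noteq> l2"
    define c where "c l = (if l = l1 then 1 else if l = l2 then -1 else (0::real))" for l
    have "fscale (c l) (EF k a b h (F l)) =
          (if l = l1 then EF k a b h (F l1) else 0) - (if l = l2 then EF k a b h (F l2) else 0)" for l
      using ne by (auto simp: c_def fscale_def fun_eq_iff)
    then have "(\<Sum>l\<in>L. fscale (c l) (EF k a b h (F l))) =
        (\<Sum>l\<in>L. (if l = l1 then EF k a b h (F l1) else 0)) - (\<Sum>l\<in>L. (if l = l2 then EF k a b h (F l2) else 0))"
      by (simp add: sum_subtractf)
    also have "\<dots> = 0" using l1 l2 L e by (simp add: sum.delta)
    finally have "\<forall>l\<in>L. c l = 0" using EF_comb_zero[OF h L indep] by blast
    then have "c l1 = 0" using l1 by blast
    then show False by (simp add: c_def)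
  qed
  have card: "card B = card L" unfolding B_def using card_image[OF inj] .
  have ind: "\<not> fsv.dependent B"
  proof
    assume "fsv.dependent B"
    then obtain u where u: "\<exists>v\<in>B. u v \<noteq> 0" and s: "(\<Sum>v\<in>B. fscale (u v) v) = 0"
      using fsv.dependent_finite[of B] L B_def by auto
    have "(\<Sum>l\<in>L. fscale (u (EF k a b h (F l))) (EF k a b h (F l))) = 0"
      using s unfolding B_def by (simp add: sum.reindex[OF inj])
    from EF_comb_zero[OF h L indep this] u show False unfolding B_def by auto
  qed
  have spn: "S \<subseteq> fsv.span B"
  proof
    fix \<mu> assume "\<mu> \<in> S"
    then obtain c where "\<mu> = EF k a b h (\<lambda>i j. \<Sum>l\<in>L. c l * F l i j)" using sp by blast
    then have "\<mu> = (\<Sum>l\<in>L. fscale (c l) (EF k a b h (F l)))" using EF_lin[OF L] by simp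
    also have "\<dots> \<in> fsv.span B"
      by (intro fsv.span_sum fsv.span_scale fsv.span_base) (auto simp: B_def)
    finally show "\<mu> \<in> fsv.span B" .
  qed
  show ?thesis
    using fsv.dim_unique[of B S "card L"] sub spn ind card unfolding B_def by blast
qed


subsection \<open>The space M\<close>

lemma coordo_alt: "coordo a b i (x, y) = (if even i then x else y) - (if even i then a else b)"
  by (simp add: coordo_def)

lemma EF_in_M: "EF k a b h P \<in> Mspace k a b h"
proof -
  have "\<forall>i<4. \<exists>q \<in> Pk_edge k i. \<forall>p \<in> edge a b h i.
          EF k a b h P (i, p) = ncross_s (normal i) (q p)"
  proof (intro allI impI)
    fix i :: nat assume i: "i < 4"
    define q where "q p = (\<Sum>j\<le>k. P i j * coordo a b i p ^ j)" for p
    have "q \<in> Pk_edge k i"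
      by (subst Pk_edge_shift[where tt = "if even i then a else b"]) (auto simp: q_def coordo_alt)
    moreover have "\<forall>p \<in> edge a b h i. EF k a b h P (i, p) = ncross_s (normal i) (q p)"
      using i by (simp add: EF_def bd_trace_def q_def)
    ultimately show "\<exists>q \<in> Pk_edge k i. \<forall>p \<in> edge a b h i.
          EF k a b h P (i, p) = ncross_s (normal i) (q p)" by blast
  qed
  then show ?thesis by (auto simp: Mspace_def EF_def bd_trace_def)
qed

lemma M_is_EF:
  assumes "\<mu> \<in> Mspace k a b h"
  shows "\<exists>P. \<mu> = EF k a b h P"
proof -
  have "\<forall>i. \<exists>c. i < 4 \<longrightarrow> (\<forall>p \<in> edge a b h i. \<mu> (i, p) = ncross_s (normal i) (\<Sum>j\<le>k. c j * coordo a b i p ^ j))"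
  proof
    fix i
    show "\<exists>c. i < 4 \<longrightarrow> (\<forall>p \<in> edge a b h i. \<mu> (i, p) = ncross_s (normal i) (\<Sum>j\<le>k. c j * coordo a b i p ^ j))"
    proof (cases "i < 4")
      case True
      then obtain q where q: "q \<in> Pk_edge k i" and e: "\<forall>p \<in> edge a b h i. \<mu> (i, p) = ncross_s (normal i) (q p)"
        using assms by (auto simp: Mspace_def)
      obtain c where c: "\<forall>x y. q (x, y) = (\<Sum>j\<le>k. c j * ((if even i then x else y) - (if even i then a else b)) ^ j)"
        using q Pk_edge_shift by blast
      have "\<forall>p \<in> edge a b h i. \<mu> (i, p) = ncross_s (normal i) (\<Sum>j\<le>k. c j * coordo a b i p ^ j)"
        using e c by (auto simp: coordo_alt)
      then show ?thesis by blast
    qed simp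
  qed
  then obtain C where C: "\<forall>i. i < 4 \<longrightarrow> (\<forall>p \<in> edge a b h i. \<mu> (i, p) = ncross_s (normal i) (\<Sum>j\<le>k. C i j * coordo a b i p ^ j))"
    using choice[of "\<lambda>i c. i < 4 \<longrightarrow> (\<forall>p \<in> edge a b h i. \<mu> (i, p) = ncross_s (normal i) (\<Sum>j\<le>k. c j * coordo a b i p ^ j))"]
    by blast
  have z: "\<mu> (i, p) = 0" if "\<not> (i < 4 \<and> p \<in> edge a b h i)" for i p
    using assms that unfolding Mspace_def by blast
  have "\<mu> (i, p) = EF k a b h C (i, p)" for i p
    using C z[of i p] by (cases "i < 4 \<and> p \<in> edge a b h i") (auto simp: EF_def bd_trace_def)
  then have "\<mu> = EF k a b h C" by auto
  then show ?thesis by blast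
qed

lemma dim_M:
  assumes h: "h > 0"
  shows "fdim (Mspace k a b h) = 4 * (k + 1)"
proof -
  define L where "L = {..<(4::nat)} \<times> {..k}"
  define F where "F l = (\<lambda>i j. if (i, j) = l then 1 else (0::real))" for l :: "nat \<times> nat"
  have fin: "finite L" by (simp add: L_def)
  have key: "(\<Sum>l\<in>L. c l * F l i j) = c (i, j)" if "i < 4" "j \<le> k" for c i j
  proof -
    have "(\<Sum>l\<in>L. c l * F l i j) = (\<Sum>l\<in>L. if l = (i, j) then c l else 0)"
      by (rule sum.cong) (auto simp: F_def)
    also have "\<dots> = c (i, j)" using that fin by (simp add: sum.delta L_def)
    finally show ?thesis .
  qed
  have "fdim (Mspace k a b h) = card L"
  proof (rule dim_EF[OF h fin])
    show "\<forall>c. (\<forall>i<4. \<forall>j\<le>k. (\<Sum>l\<in>L. c l * F l i j) = 0) \<longrightarrow> (\<forall>l\<in>L. c l = 0)"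
      using key by (auto simp: L_def)
    show "(\<lambda>l. EF k a b h (F l)) ` L \<subseteq> Mspace k a b h" using EF_in_M by blast
    show "\<forall>\<mu>\<in>Mspace k a b h. \<exists>c. \<mu> = EF k a b h (\<lambda>i j. \<Sum>l\<in>L. c l * F l i j)"
    proof
      fix \<mu> assume "\<mu> \<in> Mspace k a b h"
      then obtain P where P: "\<mu> = EF k a b h P" using M_is_EF by blast
      have "EF k a b h P = EF k a b h (\<lambda>i j. \<Sum>l\<in>L. (\<lambda>(i, j). P i j) l * F l i j)"
        by (rule EF_cong) (simp add: key)
      then show "\<exists>c. \<mu> = EF k a b h (\<lambda>i j. \<Sum>l\<in>L. c l * F l i j)" using P by blast
    qed
  qed
  also have "card L = 4 * (k + 1)" by (simp add: L_def card_cartesian_product)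
  finally show ?thesis .
qed


subsection \<open>V traces\<close>

lemma sum_delta2:
  assumes "i0 \<le> k" "j0 \<le> k"
  shows "(\<Sum>i\<le>k. \<Sum>j\<le>(k::nat). if i = i0 \<and> j = j0 then f else 0) = f"
proof -
  have "(\<Sum>j\<le>k. if i = i0 \<and> j = j0 then f else 0) = (if i = i0 then f else 0)" for i
  proof (cases "i = i0")
    case True
    then show ?thesis using assms by simp
  qed simp
  then show ?thesis using assms by simp
qed

lemma sq_zero:
  fixes C :: "nat \<Rightarrow> nat \<Rightarrow> real"
  assumes h: "h > 0"
    and z: "\<forall>x y. (x, y) \<in> square a b h \<longrightarrow> (\<Sum>i\<le>k. \<Sum>j\<le>k. C i j * (x - a) ^ i * (y - b) ^ j) = 0"
  shows "\<forall>i\<le>k. \<forall>j\<le>k. C i j = 0"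
proof (rule poly2_zero[OF h], intro ballI)
  fix s t assume s: "s \<in> {0..h}" and t: "t \<in> {0..h}"
  have "(a + s, b + t) \<in> square a b h" using s t by (auto simp: square_def)
  then show "(\<Sum>i\<le>k. \<Sum>j\<le>k. C i j * s ^ i * t ^ j) = 0" using z by fastforce
qed

lemma deriv_const_fun: "deriv (\<lambda>t. (c::real)) x = 0"
  by (rule DERIV_imp_deriv) (rule DERIV_const)

lemma dim_V:
  assumes h: "h > 0"
  shows "fdim (Vtraces k a b h) = 1"
proof -
  define P1 where "P1 = (\<lambda>(i::nat) (j::nat). if j = 0 then 1 else (0::real))"
  define F where "F = (\<lambda>l::nat. P1)"
  have tr_const: "bd_trace a b h (\<lambda>i p. ncross_s (normal i) c) = EF k a b h (\<lambda>i j. \<Sum>l\<in>{0}. (\<lambda>_. c) l * F l i j)" for c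
  proof -
    have "(\<Sum>j\<le>k. c * P1 i j * coordo a b i p ^ j) = c" for i p
    proof -
      have "(\<Sum>j\<le>k. c * P1 i j * coordo a b i p ^ j) = (\<Sum>j\<le>k. if j = 0 then c else 0)"
        by (rule sum.cong) (auto simp: P1_def)
      then show ?thesis by simp
    qed
    then show ?thesis by (simp add: EF_def F_def)
  qed
  have "fdim (Vtraces k a b h) = card {0::nat}"
  proof (rule dim_EF[OF h])
    show "\<forall>c. (\<forall>i<4. \<forall>j\<le>k. (\<Sum>l\<in>{0::nat}. c l * F l i j) = 0) \<longrightarrow> (\<forall>l\<in>{0}. c l = 0)"
    proof (intro allI impI)
      fix c :: "nat \<Rightarrow> real"
      assume "\<forall>i<4. \<forall>j\<le>k. (\<Sum>l\<in>{0::nat}. c l * F l i j) = 0"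
      then have "(\<Sum>l\<in>{0::nat}. c l * F l 0 0) = 0" by simp
      then show "\<forall>l\<in>{0}. c l = 0" by (simp add: F_def P1_def)
    qed
    have "(\<lambda>p. 1 * (fst p - a) ^ 0 * (snd p - b) ^ 0) \<in> Qk k" by (rule Qk_mono) simp
    then have q1: "(\<lambda>p. 1) \<in> Qk k" by simp
    have "EF k a b h P1 = bd_trace a b h (\<lambda>i p. ncross_s (normal i) ((\<lambda>p. 1) p))"
      using tr_const[of 1] by (simp add: F_def)
    moreover have "\<forall>p \<in> square a b h. curl_s (\<lambda>p. 1) p = 0"
      by (simp add: curl_s_def dx_def dy_def deriv_const_fun zero_prod_def)
    ultimately have "EF k a b h P1 \<in> Vtraces k a b h" using q1 unfolding Vtraces_def
      by (intro CollectI exI[where x="\<lambda>p. 1"]) simp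
    then show "(\<lambda>l. EF k a b h (F l)) ` {0} \<subseteq> Vtraces k a b h" by (simp add: F_def)
    show "\<forall>\<mu>\<in>Vtraces k a b h. \<exists>c. \<mu> = EF k a b h (\<lambda>i j. \<Sum>l\<in>{0}. c l * F l i j)"
    proof
      fix \<mu> assume "\<mu> \<in> Vtraces k a b h"
      then obtain v where mu: "\<mu> = bd_trace a b h (\<lambda>i p. ncross_s (normal i) (v p))"
        and v: "v \<in> Qk k" and cv: "\<forall>p \<in> square a b h. curl_s v p = 0"
        by (auto simp: Vtraces_def)
      obtain c where m: "\<forall>i j. k < i \<or> k < j \<longrightarrow> c i j = 0"
        and f: "\<forall>x y. v (x, y) = (\<Sum>i\<le>k. \<Sum>j\<le>k. c i j * (x - a) ^ i * (y - b) ^ j)"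
        using Qk_masked[OF v, of a b] by blast
      have "\<forall>i\<le>k. \<forall>j\<le>k. of_nat (Suc i) * c (Suc i) j = 0"
      proof (rule sq_zero[OF h], intro allI impI)
        fix x y assume "(x, y) \<in> square a b h"
        then have "dx v (x, y) = 0" using cv by (auto simp: curl_s_def zero_prod_def)
        then show "(\<Sum>i\<le>k. \<Sum>j\<le>k. of_nat (Suc i) * c (Suc i) j * (x - a) ^ i * (y - b) ^ j) = 0"
          using dx_rep[OF m f] by simp
      qed
      note X = this
      have cx: "c (Suc i) j = 0" for i j
      proof (cases "i \<le> k \<and> j \<le> k")
        case True then show ?thesis using X by auto
      next
        case False then show ?thesis using m by auto
      qed
      have "\<forall>i\<le>k. \<forall>j\<le>k. of_nat (Suc j) * c i (Suc j) = 0"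
      proof (rule sq_zero[OF h], intro allI impI)
        fix x y assume "(x, y) \<in> square a b h"
        then have "dy v (x, y) = 0" using cv by (auto simp: curl_s_def zero_prod_def)
        then show "(\<Sum>i\<le>k. \<Sum>j\<le>k. of_nat (Suc j) * c i (Suc j) * (x - a) ^ i * (y - b) ^ j) = 0"
          using dy_rep[OF m f] by simp
      qed
      note Y = this
      have cy: "c i (Suc j) = 0" for i j
      proof (cases "i \<le> k \<and> j \<le> k")
        case True then show ?thesis using Y by auto
      next
        case False then show ?thesis using m by auto
      qed
      have cz: "c i j = (if i = 0 \<and> j = 0 then c 0 0 else 0)" for i j
        using cx cy by (cases i; cases j) auto
      have "v p = c 0 0" for p
      proof -
        obtain x y where p: "p = (x, y)" by fastforce
        have "v p = (\<Sum>i\<le>k. \<Sum>j\<le>k. (if i = 0 \<and> j = 0 then c 0 0 else 0) * (x - a) ^ i * (y - b) ^ j)"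
          using f p by (subst (asm) cz) simp
        also have "\<dots> = (\<Sum>i\<le>k. \<Sum>j\<le>k. if i = 0 \<and> j = 0 then c 0 0 else 0)"
          by (intro sum.cong) auto
        also have "\<dots> = c 0 0" by (rule sum_delta2) auto
        finally show ?thesis .
      qed
      then have "\<mu> = bd_trace a b h (\<lambda>i p. ncross_s (normal i) (c 0 0))" using mu by simp
      then show "\<exists>c. \<mu> = EF k a b h (\<lambda>i j. \<Sum>l\<in>{0}. c l * F l i j)"
        using tr_const[of "c 0 0"] by (intro exI[where x="\<lambda>_. c 0 0"]) simp
    qed
  qed simp
  then show ?thesis by simp
qed


subsection \<open>W traces: gradients of monomials\<close>

definition gm :: "real \<Rightarrow> real \<Rightarrow> nat \<Rightarrow> nat \<Rightarrow> real \<times> real \<Rightarrow> real \<times> real" where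
  "gm a b m n p = (of_nat m * (fst p - a) ^ (m - 1) * (snd p - b) ^ n,
                   of_nat n * (fst p - a) ^ m * (snd p - b) ^ (n - 1))"

definition G :: "real \<Rightarrow> nat \<Rightarrow> nat \<Rightarrow> nat \<Rightarrow> nat \<Rightarrow> real" where
  "G h m n i j = (if i = 0 then (if m = Suc j \<and> n = 0 then - of_nat m else 0)
     else if i = 1 then (if n = Suc j then - (of_nat n * h ^ m) else 0)
     else if i = 2 then (if m = Suc j then of_nat m * h ^ n else 0)
     else (if n = Suc j \<and> m = 0 then of_nat n else 0))"

definition Wtr :: "real \<Rightarrow> real \<Rightarrow> real \<Rightarrow> (real \<times> real \<Rightarrow> real \<times> real) \<Rightarrow> (nat \<times> (real \<times> real) \<Rightarrow> real \<times> real)" where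
  "Wtr a b h w = bd_trace a b h (\<lambda>i p. ntan (normal i) (w p))"

lemma sum_Suc_delta:
  assumes "m \<le> Suc k"
  shows "(\<Sum>j\<le>k. if m = Suc j then f j else (0::real)) = (if m = 0 then 0 else f (m - 1))"
proof (cases m)
  case 0 then show ?thesis by simp
next
  case (Suc m')
  then have "(\<Sum>j\<le>k. if m = Suc j then f j else 0) = (\<Sum>j\<le>k. if j = m' then f j else 0)"
    by (intro sum.cong) auto
  also have "\<dots> = f m'" using assms Suc by (simp add: sum.delta)
  finally show ?thesis using Suc by simp
qed

lemma G_poly:
  assumes "m \<le> Suc k" "n \<le> Suc k"
  shows "(\<Sum>j\<le>k. G h m n 0 j * s ^ j) = - (if n = 0 then of_nat m * s ^ (m - 1) else 0)"
    and "(\<Sum>j\<le>k. G h m n 1 j * s ^ j) = - (of_nat n * h ^ m * s ^ (n - 1))"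
    and "(\<Sum>j\<le>k. G h m n 2 j * s ^ j) = of_nat m * h ^ n * s ^ (m - 1)"
    and "(\<Sum>j\<le>k. G h m n 3 j * s ^ j) = (if m = 0 then of_nat n * s ^ (n - 1) else 0)"
proof -
  have "(\<Sum>j\<le>k. G h m n 0 j * s ^ j) = (\<Sum>j\<le>k. if m = Suc j then (if n = 0 then - of_nat m * s ^ j else 0) else 0)"
    by (intro sum.cong) (auto simp: G_def)
  also have "\<dots> = - (if n = 0 then of_nat m * s ^ (m - 1) else 0)"
    using assms by (simp add: sum_Suc_delta)
  finally show "(\<Sum>j\<le>k. G h m n 0 j * s ^ j) = - (if n = 0 then of_nat m * s ^ (m - 1) else 0)" .
  have "(\<Sum>j\<le>k. G h m n 1 j * s ^ j) = (\<Sum>j\<le>k. if n = Suc j then - (of_nat n * h ^ m) * s ^ j else 0)"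
    by (intro sum.cong) (auto simp: G_def)
  also have "\<dots> = - (of_nat n * h ^ m * s ^ (n - 1))"
    using assms by (simp add: sum_Suc_delta)
  finally show "(\<Sum>j\<le>k. G h m n 1 j * s ^ j) = - (of_nat n * h ^ m * s ^ (n - 1))" .
  have "(\<Sum>j\<le>k. G h m n 2 j * s ^ j) = (\<Sum>j\<le>k. if m = Suc j then of_nat m * h ^ n * s ^ j else 0)"
    by (intro sum.cong) (auto simp: G_def)
  also have "\<dots> = of_nat m * h ^ n * s ^ (m - 1)"
    using assms by (simp add: sum_Suc_delta)
  finally show "(\<Sum>j\<le>k. G h m n 2 j * s ^ j) = of_nat m * h ^ n * s ^ (m - 1)" .
  have "(\<Sum>j\<le>k. G h m n 3 j * s ^ j) = (\<Sum>j\<le>k. if n = Suc j then (if m = 0 then of_nat n * s ^ j else 0) else 0)"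
    by (intro sum.cong) (auto simp: G_def)
  also have "\<dots> = (if m = 0 then of_nat n * s ^ (n - 1) else 0)"
    using assms by (simp add: sum_Suc_delta)
  finally show "(\<Sum>j\<le>k. G h m n 3 j * s ^ j) = (if m = 0 then of_nat n * s ^ (n - 1) else 0)" .
qed

lemma edge_cases:
  assumes "i < 4" "p \<in> edge a b h i"
  obtains s where "i = 0" "p = (a + s, b)" "coordo a b i p = s"
    | s where "i = 1" "p = (a + h, b + s)" "coordo a b i p = s"
    | s where "i = 2" "p = (a + s, b + h)" "coordo a b i p = s"
    | s where "i = 3" "p = (a, b + s)" "coordo a b i p = s"
proof -
  obtain x y where p: "p = (x, y)" by fastforce
  have "i = 0 \<or> i = 1 \<or> i = 2 \<or> i = 3" using assms(1) by auto
  then show ?thesis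
  proof (elim disjE)
    assume "i = 0" then show ?thesis using that(1)[of "x - a"] assms p by (auto simp: edge_def coordo_def)
  next
    assume "i = 1" then show ?thesis using that(2)[of "y - b"] assms p by (auto simp: edge_def coordo_def)
  next
    assume "i = 2" then show ?thesis using that(3)[of "x - a"] assms p by (auto simp: edge_def coordo_def)
  next
    assume "i = 3" then show ?thesis using that(4)[of "y - b"] assms p by (auto simp: edge_def coordo_def)
  qed
qed

lemma Wtr_gm:
  assumes "m \<le> Suc k" "n \<le> Suc k"
  shows "Wtr a b h (gm a b m n) = EF k a b h (G h m n)"
proof -
  have "Wtr a b h (gm a b m n) (i, p) = EF k a b h (G h m n) (i, p)" for i p
  proof (cases "i < 4 \<and> p \<in> edge a b h i")
    case True
    then have e: "Wtr a b h (gm a b m n) (i, p) = ntan (normal i) (gm a b m n p)"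
      "EF k a b h (G h m n) (i, p) = ncross_s (normal i) (\<Sum>j\<le>k. G h m n i j * coordo a b i p ^ j)"
      by (auto simp: Wtr_def EF_def bd_trace_def)
    from True show ?thesis
    proof (elim conjE edge_cases)
      fix s assume "i = 0" "p = (a + s, b)" "coordo a b i p = s"
      then show ?thesis using e G_poly[OF assms, of h s]
        by (simp add: gm_def ntan_def ncross_s_def normal_def power_0_left)
    next
      fix s assume "i = 1" "p = (a + h, b + s)" "coordo a b i p = s"
      then show ?thesis using e G_poly[OF assms, of h s]
        by (simp add: gm_def ntan_def ncross_s_def normal_def)
    next
      fix s assume "i = 2" "p = (a + s, b + h)" "coordo a b i p = s"
      then show ?thesis using e G_poly[OF assms, of h s]
        by (simp add: gm_def ntan_def ncross_s_def normal_def)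
    next
      fix s assume "i = 3" "p = (a, b + s)" "coordo a b i p = s"
      then show ?thesis using e G_poly[OF assms, of h s]
        by (simp add: gm_def ntan_def ncross_s_def normal_def power_0_left)
    qed
  next
    case False
    then show ?thesis by (auto simp: Wtr_def EF_def bd_trace_def)
  qed
  then show ?thesis by auto
qed


lemma curl_gm: "curl_v (gm a b m n) p = 0"
proof -
  obtain x y where p: "p = (x, y)" by fastforce
  have d1: "dy (fst \<circ> gm a b m n) p = of_nat m * (x - a) ^ (m - 1) * (of_nat n * (y - b) ^ (n - 1))"
    unfolding dy_def p
  proof (simp add: gm_def, rule DERIV_imp_deriv)
    show "((\<lambda>t. of_nat m * (x - a) ^ (m - Suc 0) * (t - b) ^ n) has_real_derivative
        of_nat m * (x - a) ^ (m - Suc 0) * (of_nat n * (y - b) ^ (n - Suc 0))) (at y)"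
      by (auto intro!: derivative_eq_intros)
  qed
  have d2: "dx (snd \<circ> gm a b m n) p = of_nat n * (of_nat m * (x - a) ^ (m - 1)) * (y - b) ^ (n - 1)"
    unfolding dx_def p
  proof (simp add: gm_def, rule DERIV_imp_deriv)
    show "((\<lambda>t. of_nat n * (t - a) ^ m * (y - b) ^ (n - Suc 0)) has_real_derivative
        of_nat n * (of_nat m * (x - a) ^ (m - Suc 0)) * (y - b) ^ (n - Suc 0)) (at x)"
      by (auto intro!: derivative_eq_intros)
  qed
  show ?thesis by (simp add: curl_v_def d1 d2)
qed

lemma gm_Qk2:
  assumes "m = 0 \<or> (m - 1 \<le> k \<and> n \<le> k)" and "n = 0 \<or> (m \<le> k \<and> n - 1 \<le> k)"
  shows "gm a b m n \<in> Qk2 k"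
proof -
  have "(\<lambda>p. of_nat m * (fst p - a) ^ (m - 1) * (snd p - b) ^ n) \<in> Qk k"
    by (rule Qk_mono) (use assms in auto)
  moreover have "(\<lambda>p. of_nat n * (fst p - a) ^ m * (snd p - b) ^ (n - 1)) \<in> Qk k"
    by (rule Qk_mono) (use assms in auto)
  ultimately show ?thesis by (simp add: Qk2_def gm_def comp_def)
qed


definition PW :: "nat \<Rightarrow> real \<Rightarrow> (nat \<Rightarrow> nat \<Rightarrow> real) \<Rightarrow> (nat \<Rightarrow> nat \<Rightarrow> real) \<Rightarrow> nat \<Rightarrow> nat \<Rightarrow> real" where
  "PW k h A B i j = (if i = 0 then - A j 0 else if i = 1 then - (\<Sum>m\<le>k. B m j * h ^ m)
      else if i = 2 then (\<Sum>n\<le>k. A j n * h ^ n) else B 0 j)"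

lemma sum_zero_pow: "(\<Sum>j\<le>k. f j * (0::real) ^ j) = f 0"
  by (induction k) auto

lemma Wtr_rep:
  assumes A: "\<forall>x y. fst (w (x, y)) = (\<Sum>i\<le>k. \<Sum>j\<le>k. A i j * (x - a) ^ i * (y - b) ^ j)"
    and B: "\<forall>x y. snd (w (x, y)) = (\<Sum>i\<le>k. \<Sum>j\<le>k. B i j * (x - a) ^ i * (y - b) ^ j)"
  shows "Wtr a b h w = EF k a b h (PW k h A B)"
proof -
  have "Wtr a b h w (i, p) = EF k a b h (PW k h A B) (i, p)" for i p
  proof (cases "i < 4 \<and> p \<in> edge a b h i")
    case True
    then have e: "Wtr a b h w (i, p) = ntan (normal i) (w p)"
      "EF k a b h (PW k h A B) (i, p) = ncross_s (normal i) (\<Sum>j\<le>k. PW k h A B i j * coordo a b i p ^ j)"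
      by (auto simp: Wtr_def EF_def bd_trace_def)
    from True show ?thesis
    proof (elim conjE edge_cases)
      fix s assume i: "i = 0" and p: "p = (a + s, b)" and c: "coordo a b i p = s"
      have "fst (w p) = (\<Sum>i\<le>k. \<Sum>j\<le>k. (A i j * s ^ i) * 0 ^ j)" using A p by simp
      also have "\<dots> = (\<Sum>i\<le>k. A i 0 * s ^ i)" by (simp only: sum_zero_pow)
      finally have "fst (w p) = - (\<Sum>j\<le>k. PW k h A B i j * s ^ j)"
        by (simp add: PW_def i sum_negf)
      then show ?thesis using e i c
        by (simp add: ntan_def ncross_s_def normal_def prod_eq_iff)
    next
      fix s assume i: "i = 1" and p: "p = (a + h, b + s)" and c: "coordo a b i p = s"
      have "snd (w p) = (\<Sum>i\<le>k. \<Sum>j\<le>k. B i j * h ^ i * s ^ j)" using B p by simp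
      also have "\<dots> = (\<Sum>j\<le>k. \<Sum>i\<le>k. B i j * h ^ i * s ^ j)" by (rule sum.swap)
      also have "\<dots> = - (\<Sum>j\<le>k. PW k h A B i j * s ^ j)"
        by (simp add: PW_def i sum_negf sum_distrib_right)
      finally show ?thesis using e i c
        by (simp add: ntan_def ncross_s_def normal_def prod_eq_iff)
    next
      fix s assume i: "i = 2" and p: "p = (a + s, b + h)" and c: "coordo a b i p = s"
      have "fst (w p) = (\<Sum>i\<le>k. \<Sum>j\<le>k. A i j * s ^ i * h ^ j)" using A p by simp
      also have "\<dots> = (\<Sum>j\<le>k. PW k h A B i j * s ^ j)"
        by (simp add: PW_def i sum_distrib_right sum_distrib_left mult_ac)
      finally show ?thesis using e i c
        by (simp add: ntan_def ncross_s_def normal_def prod_eq_iff)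
    next
      fix s assume i: "i = 3" and p: "p = (a, b + s)" and c: "coordo a b i p = s"
      have "snd (w p) = (\<Sum>i\<le>k. (\<Sum>j\<le>k. B i j * s ^ j) * 0 ^ i)" using B p
        by (simp add: sum_distrib_right sum_distrib_left mult_ac)
      also have "\<dots> = (\<Sum>j\<le>k. B 0 j * s ^ j)" by (rule sum_zero_pow)
      also have "\<dots> = (\<Sum>j\<le>k. PW k h A B i j * s ^ j)" by (simp add: PW_def i)
      finally show ?thesis using e i c
        by (simp add: ntan_def ncross_s_def normal_def prod_eq_iff)
    qed
  next
    case False
    then show ?thesis by (auto simp: Wtr_def EF_def bd_trace_def)
  qed
  then show ?thesis by auto
qed


subsection \<open>Dimension of W traces\<close>

lemma dim_EF2:
  assumes h: "h > 0" and L: "finite L"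
    and indep: "\<forall>c. (\<forall>i<4. \<forall>j\<le>k. (\<Sum>l\<in>L. c l * F l i j) = 0) \<longrightarrow> (\<forall>l\<in>L. c l = 0)"
    and sub: "(\<lambda>l. EF k a b h (F l)) ` L \<subseteq> S"
    and spn: "S \<subseteq> fsv.span ((\<lambda>l. EF k a b h (F l)) ` L)"
  shows "fdim S = card L"
proof -
  define B where "B = (\<lambda>l. EF k a b h (F l)) ` L"
  have inj: "inj_on (\<lambda>l. EF k a b h (F l)) L"
  proof (rule inj_onI, rule ccontr)
    fix l1 l2 assume l1: "l1 \<in> L" and l2: "l2 \<in> L" and e: "EF k a b h (F l1) = EF k a b h (F l2)"
      and ne: "l1 \<noteq> l2"
    define c where "c l = (if l = l1 then 1 else if l = l2 then -1 else (0::real))" for l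
    have "fscale (c l) (EF k a b h (F l)) =
          (if l = l1 then EF k a b h (F l1) else 0) - (if l = l2 then EF k a b h (F l2) else 0)" for l
      using ne by (auto simp: c_def fscale_def fun_eq_iff)
    then have "(\<Sum>l\<in>L. fscale (c l) (EF k a b h (F l))) =
        (\<Sum>l\<in>L. (if l = l1 then EF k a b h (F l1) else 0)) - (\<Sum>l\<in>L. (if l = l2 then EF k a b h (F l2) else 0))"
      by (simp add: sum_subtractf)
    also have "\<dots> = 0" using l1 l2 L e by (simp add: sum.delta)
    finally have "\<forall>l\<in>L. c l = 0" using EF_comb_zero[OF h L indep] by blast
    then have "c l1 = 0" using l1 by blast
    then show False by (simp add: c_def)
  qed
  have card: "card B = card L" unfolding B_def using card_image[OF inj] .
  have ind: "\<not> fsv.dependent B"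
  proof
    assume "fsv.dependent B"
    then obtain u where u: "\<exists>v\<in>B. u v \<noteq> 0" and s: "(\<Sum>v\<in>B. fscale (u v) v) = 0"
      using fsv.dependent_finite[of B] L B_def by auto
    have "(\<Sum>l\<in>L. fscale (u (EF k a b h (F l))) (EF k a b h (F l))) = 0"
      using s unfolding B_def by (simp add: sum.reindex[OF inj])
    from EF_comb_zero[OF h L indep this] u show False unfolding B_def by auto
  qed
  show ?thesis
    using fsv.dim_unique[of B S "card L"] sub spn ind card unfolding B_def by blast
qed

lemma sum_single:
  assumes "finite I" "l0 \<in> I" "\<forall>l\<in>I. l \<noteq> l0 \<longrightarrow> f l = 0"
  shows "(\<Sum>l\<in>I. f l) = (f l0 :: real)"
proof -
  have "(\<Sum>l\<in>I. f l) = (\<Sum>l\<in>I. if l = l0 then f l0 else 0)"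
    using assms by (intro sum.cong) auto
  also have "\<dots> = f l0" using assms by (simp add: sum.delta)
  finally show ?thesis .
qed

lemma curl_rel:
  fixes A B :: "nat \<Rightarrow> nat \<Rightarrow> real"
  assumes h: "h > 0"
    and mA: "\<forall>i j. k < i \<or> k < j \<longrightarrow> A i j = 0"
    and mB: "\<forall>i j. k < i \<or> k < j \<longrightarrow> B i j = 0"
    and fA: "\<forall>x y. fst (w (x, y)) = (\<Sum>i\<le>k. \<Sum>j\<le>k. A i j * (x - a) ^ i * (y - b) ^ j)"
    and fB: "\<forall>x y. snd (w (x, y)) = (\<Sum>i\<le>k. \<Sum>j\<le>k. B i j * (x - a) ^ i * (y - b) ^ j)"
    and cw: "\<forall>p \<in> square a b h. curl_v w p = 0"
  shows "\<forall>i\<le>k. \<forall>j\<le>k. of_nat (Suc j) * A i (Suc j) = of_nat (Suc i) * B (Suc i) j"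
proof -
  have fA': "\<forall>x y. (fst \<circ> w) (x, y) = (\<Sum>i\<le>k. \<Sum>j\<le>k. A i j * (x - a) ^ i * (y - b) ^ j)"
    using fA by simp
  have fB': "\<forall>x y. (snd \<circ> w) (x, y) = (\<Sum>i\<le>k. \<Sum>j\<le>k. B i j * (x - a) ^ i * (y - b) ^ j)"
    using fB by simp
  have "\<forall>i\<le>k. \<forall>j\<le>k. of_nat (Suc i) * B (Suc i) j - of_nat (Suc j) * A i (Suc j) = 0"
  proof (rule sq_zero[OF h], intro allI impI)
    fix x y assume "(x, y) \<in> square a b h"
    then have "curl_v w (x, y) = 0" using cw by blast
    then have "dx (snd \<circ> w) (x, y) - dy (fst \<circ> w) (x, y) = 0" by (simp add: curl_v_def)
    then show "(\<Sum>i\<le>k. \<Sum>j\<le>k. (of_nat (Suc i) * B (Suc i) j - of_nat (Suc j) * A i (Suc j)) * (x - a) ^ i * (y - b) ^ j) = 0"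
      by (simp add: dx_rep[OF mB fB'] dy_rep[OF mA fA'] left_diff_distrib sum_subtractf)
  qed
  then show ?thesis by simp
qed

definition Iset :: "nat \<Rightarrow> (nat \<times> nat) set" where
  "Iset k = {(m, n). (n = 0 \<and> 1 \<le> m \<and> m \<le> Suc k) \<or> (m = 0 \<and> 1 \<le> n \<and> n \<le> Suc k)
                    \<or> (n = 1 \<and> 1 \<le> m \<and> m \<le> k) \<or> (m = 1 \<and> 2 \<le> n \<and> n \<le> k)}"

lemma Iset_sub: "Iset k \<subseteq> {..Suc k} \<times> {..Suc k}"
  by (auto simp: Iset_def)

lemma Iset_finite: "finite (Iset k)"
  using Iset_sub by (rule finite_subset) simp

lemma card_Iset:
  assumes "k \<ge> 1"
  shows "card (Iset k) = 4 * k + 1"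
proof -
  define I1 where "I1 = (\<lambda>m. (m, 0::nat)) ` {1..Suc k}"
  define I2 where "I2 = (\<lambda>n. (0::nat, n)) ` {1..Suc k}"
  define I3 where "I3 = (\<lambda>m. (m, 1::nat)) ` {1..k}"
  define I4 where "I4 = (\<lambda>n. (1::nat, n)) ` {2..k}"
  have eq: "Iset k = I1 \<union> I2 \<union> I3 \<union> I4"
    by (auto simp: Iset_def I1_def I2_def I3_def I4_def image_iff)
  have c1: "card I1 = Suc k" unfolding I1_def by (subst card_image) (auto simp: inj_on_def)
  have c2: "card I2 = Suc k" unfolding I2_def by (subst card_image) (auto simp: inj_on_def)
  have c3: "card I3 = k" unfolding I3_def by (subst card_image) (auto simp: inj_on_def)
  have c4: "card I4 = k - 1" unfolding I4_def by (subst card_image) (auto simp: inj_on_def)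
  have f: "finite I1" "finite I2" "finite I3" "finite I4" by (auto simp: I1_def I2_def I3_def I4_def)
  have d12: "I1 \<inter> I2 = {}" by (auto simp: I1_def I2_def)
  have d123: "(I1 \<union> I2) \<inter> I3 = {}" by (auto simp: I1_def I2_def I3_def)
  have d1234: "(I1 \<union> I2 \<union> I3) \<inter> I4 = {}" by (auto simp: I1_def I2_def I3_def I4_def)
  have "card (Iset k) = card I1 + card I2 + card I3 + card I4"
    unfolding eq using f d12 d123 d1234
    by (simp add: card_Un_disjoint)
  then show ?thesis using c1 c2 c3 c4 assms by simp
qed


lemma Iset_indep:
  assumes h: "h > 0" and k: "k \<ge> 1"
  shows "\<forall>c. (\<forall>i<4. \<forall>j\<le>k. (\<Sum>l\<in>Iset k. c l * G h (fst l) (snd l) i j) = 0) \<longrightarrow> (\<forall>l\<in>Iset k. c l = 0)"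
proof (intro allI impI)
  fix c :: "nat \<times> nat \<Rightarrow> real"
  assume Z: "\<forall>i<4. \<forall>j\<le>k. (\<Sum>l\<in>Iset k. c l * G h (fst l) (snd l) i j) = 0"
  note fin = Iset_finite[of k]
  have s1: "c (m, 0) = 0" if m: "1 \<le> m" "m \<le> Suc k" for m
  proof -
    have mem: "(m, 0) \<in> Iset k" using m by (auto simp: Iset_def)
    have "(\<Sum>l\<in>Iset k. c l * G h (fst l) (snd l) 0 (m - 1)) = 0" using Z m by auto
    moreover have "(\<Sum>l\<in>Iset k. c l * G h (fst l) (snd l) 0 (m - 1)) = c (m, 0) * G h m 0 0 (m - 1)"
      using m by (subst sum_single[OF fin mem]) (auto simp: G_def)
    ultimately show ?thesis using m by (simp add: G_def)
  qed
  have s2: "c (0, n) = 0" if n: "1 \<le> n" "n \<le> Suc k" for n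
  proof -
    have mem: "(0, n) \<in> Iset k" using n by (auto simp: Iset_def)
    have "(\<Sum>l\<in>Iset k. c l * G h (fst l) (snd l) 3 (n - 1)) = 0" using Z n by auto
    moreover have "(\<Sum>l\<in>Iset k. c l * G h (fst l) (snd l) 3 (n - 1)) = c (0, n) * G h 0 n 3 (n - 1)"
      using n by (subst sum_single[OF fin mem]) (auto simp: G_def)
    ultimately show ?thesis using n by (simp add: G_def)
  qed
  have s3: "c (m, 1) = 0" if m: "2 \<le> m" "m \<le> k" for m
  proof -
    have mem: "(m, 1) \<in> Iset k" using m by (auto simp: Iset_def)
    have "(\<Sum>l\<in>Iset k. c l * G h (fst l) (snd l) 2 (m - 1)) = 0" using Z m by auto
    moreover have "(\<Sum>l\<in>Iset k. c l * G h (fst l) (snd l) 2 (m - 1)) = c (m, 1) * G h (fst (m, 1)) (snd (m, 1)) 2 (m - 1)"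
    proof -
    have P: "\<forall>l\<in>Iset k. l \<noteq> (m, 1) \<longrightarrow> c l * G h (fst l) (snd l) 2 (m - 1) = 0"
    proof (intro ballI impI)
      fix l assume l: "l \<in> Iset k" "l \<noteq> (m, 1)"
      show "c l * G h (fst l) (snd l) 2 (m - 1) = 0"
      proof (cases "fst l = m")
        case True
        then have "snd l = 0" using l m by (auto simp: Iset_def)
        then have "l = (m, 0)" using True by (metis prod.collapse)
        then show ?thesis using s1 m by simp
      qed (use m in \<open>auto simp: G_def\<close>)
    qed
    show ?thesis using sum_single[OF fin mem P] by simp
    qed
    ultimately show ?thesis using m h by (simp add: G_def)
  qed
  have s4: "c (1, n) = 0" if n: "2 \<le> n" "n \<le> k" for n
  proof -
    have mem: "(1, n) \<in> Iset k" using n by (auto simp: Iset_def)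
    have "(\<Sum>l\<in>Iset k. c l * G h (fst l) (snd l) 1 (n - 1)) = 0" using Z n by auto
    moreover have "(\<Sum>l\<in>Iset k. c l * G h (fst l) (snd l) 1 (n - 1)) = c (1, n) * G h (fst (1, n)) (snd (1, n)) 1 (n - 1)"
    proof -
    have P: "\<forall>l\<in>Iset k. l \<noteq> (1, n) \<longrightarrow> c l * G h (fst l) (snd l) 1 (n - 1) = 0"
    proof (intro ballI impI)
      fix l assume l: "l \<in> Iset k" "l \<noteq> (1, n)"
      show "c l * G h (fst l) (snd l) 1 (n - 1) = 0"
      proof (cases "snd l = n")
        case True
        then have "fst l = 0" using l n by (auto simp: Iset_def)
        then have "l = (0, n)" using True by (metis prod.collapse)
        then show ?thesis using s2 n by simp
      qed (use n in \<open>auto simp: G_def\<close>)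
    qed
    show ?thesis using sum_single[OF fin mem P] by simp
    qed
    ultimately show ?thesis using n h by (simp add: G_def)
  qed
  have s5: "c (1, 1) = 0"
  proof -
    have mem: "(1, 1) \<in> Iset k" using k by (auto simp: Iset_def)
    have "(\<Sum>l\<in>Iset k. c l * G h (fst l) (snd l) 2 0) = 0" using Z by auto
    moreover have "(\<Sum>l\<in>Iset k. c l * G h (fst l) (snd l) 2 0) = c (1, 1) * G h (fst (1, 1)) (snd (1, 1)) 2 0"
    proof -
    have P: "\<forall>l\<in>Iset k. l \<noteq> (1, 1) \<longrightarrow> c l * G h (fst l) (snd l) 2 0 = 0"
    proof (intro ballI impI)
      fix l assume l: "l \<in> Iset k" "l \<noteq> (1, 1)"
      show "c l * G h (fst l) (snd l) 2 0 = 0"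
      proof (cases "fst l = 1")
        case True
        then have "snd l = 0 \<or> (2 \<le> snd l \<and> snd l \<le> k)" using l by (auto simp: Iset_def)
        then show ?thesis
        proof
          assume "snd l = 0"
          then have "l = (1, 0)" using True by (metis prod.collapse)
          then show ?thesis using s1 by simp
        next
          assume "2 \<le> snd l \<and> snd l \<le> k"
          moreover have "l = (1, snd l)" using True by (metis prod.collapse)
          ultimately show ?thesis using s4 by (metis mult_zero_left)
        qed
      qed (auto simp: G_def)
    qed
    show ?thesis using sum_single[OF fin mem P] by simp
    qed
    ultimately show ?thesis using h by (simp add: G_def)
  qed
  show "\<forall>l\<in>Iset k. c l = 0"
  proof
    fix l assume l: "l \<in> Iset k"
    obtain m n where mn: "l = (m, n)" by fastforce
    show "c l = 0"
      using l s1 s2 s3 s4 s5 unfolding mn Iset_def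
      by (auto simp: le_Suc_eq) (metis One_nat_def Suc_1 Suc_leI le_neq_implies_less s3)
  qed
qed


lemma W_sub:
  assumes k: "k \<ge> 1"
  shows "(\<lambda>l. EF k a b h (G h (fst l) (snd l))) ` Iset k \<subseteq> Wtraces k a b h"
proof
  fix \<mu> assume "\<mu> \<in> (\<lambda>l. EF k a b h (G h (fst l) (snd l))) ` Iset k"
  then obtain m n where mn: "(m, n) \<in> Iset k" and mu: "\<mu> = EF k a b h (G h m n)" by auto
  have b: "m \<le> Suc k" "n \<le> Suc k" using mn by (auto simp: Iset_def)
  have "\<mu> = Wtr a b h (gm a b m n)" using mu Wtr_gm[OF b] by simp
  moreover have "gm a b m n \<in> Qk2 k"
    by (rule gm_Qk2) (use mn in \<open>auto simp: Iset_def\<close>)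
  moreover have "\<forall>p \<in> square a b h. curl_v (gm a b m n) p = 0" by (simp add: curl_gm)
  ultimately show "\<mu> \<in> Wtraces k a b h" unfolding Wtraces_def Wtr_def by blast
qed

lemma EF_G00: "EF k a b h (G h 0 0) = 0"
proof -
  have "EF k a b h (G h 0 0) = EF k a b h (\<lambda>i j. \<Sum>l\<in>({}::nat set). 0 * G h 0 0 i j)"
    by (rule EF_cong) (simp add: G_def)
  also have "\<dots> = 0" by (subst EF_lin) simp_all
  finally show ?thesis .
qed

lemma EF_comb:
  assumes h: "h > 0" and m: "2 \<le> m" "m \<le> k" and n: "2 \<le> n" "n \<le> k"
  shows "EF k a b h (G h m n) \<in> fsv.span ((\<lambda>l. EF k a b h (G h (fst l) (snd l))) ` Iset k)"
proof -
  define L3 where "L3 = {(m, 1), (1, n), (1::nat, 1::nat)}"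
  define cc where "cc l = (if l = (m, 1) then h ^ (n - 1) else if l = (1, n) then h ^ (m - 1) else - (h ^ (m + n - 2)))" for l
  have p1: "h * h ^ (n - Suc 0) = h ^ n" using n by (cases n) auto
  have p2: "h * h ^ (m - Suc 0) = h ^ m" using m by (cases m) auto
  have p3: "h ^ n * h ^ (m - Suc 0) = h * h ^ (m + n - 2)"
  proof -
    have "h ^ n * h ^ (m - Suc 0) = h ^ (n + (m - Suc 0))" by (simp add: power_add)
    also have "n + (m - Suc 0) = Suc (m + n - 2)" using m n by simp
    finally show ?thesis by simp
  qed
  have p4: "h ^ m * h ^ (n - Suc 0) = h * h ^ (m + n - 2)"
  proof -
    have "h ^ m * h ^ (n - Suc 0) = h ^ (m + (n - Suc 0))" by (simp add: power_add)
    also have "m + (n - Suc 0) = Suc (m + n - 2)" using m n by simp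
    finally show ?thesis by simp
  qed
  have id: "G h m n i j = (\<Sum>l\<in>L3. cc l * G h (fst l) (snd l) i j)" if "i < 4" for i j
  proof -
    have ne: "(m, 1) \<noteq> (1, n)" "(m, 1) \<noteq> (1::nat, 1::nat)" "(1, n) \<noteq> (1::nat, 1::nat)" using m n by auto
    have "(\<Sum>l\<in>L3. cc l * G h (fst l) (snd l) i j) =
        h ^ (n - 1) * G h m 1 i j + h ^ (m - 1) * G h 1 n i j - h ^ (m + n - 2) * G h 1 1 i j"
      using ne by (simp add: L3_def cc_def)
    also have "\<dots> = G h m n i j"
    proof -
      have "i = 0 \<or> i = 1 \<or> i = 2 \<or> i = 3" using that by auto
      then show ?thesis using m n
        by (elim disjE) (auto simp: G_def p1 p2 p3 p4 mult_ac)
    qed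
    finally show ?thesis by simp
  qed
  have "EF k a b h (G h m n) = EF k a b h (\<lambda>i j. \<Sum>l\<in>L3. cc l * G h (fst l) (snd l) i j)"
    by (rule EF_cong) (simp add: id)
  also have "\<dots> = (\<Sum>l\<in>L3. fscale (cc l) (EF k a b h (G h (fst l) (snd l))))"
    by (rule EF_lin) (simp add: L3_def)
  also have "\<dots> \<in> fsv.span ((\<lambda>l. EF k a b h (G h (fst l) (snd l))) ` Iset k)"
  proof (intro fsv.span_sum fsv.span_scale fsv.span_base)
    fix l assume "l \<in> L3"
    then have "l \<in> Iset k" using m n by (auto simp: L3_def Iset_def)
    then show "EF k a b h (G h (fst l) (snd l)) \<in> (\<lambda>l. EF k a b h (G h (fst l) (snd l))) ` Iset k" by blast
  qed
  finally show ?thesis .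
qed


lemma W_span:
  assumes h: "h > 0" and k: "k \<ge> 1"
  shows "Wtraces k a b h \<subseteq> fsv.span ((\<lambda>l. EF k a b h (G h (fst l) (snd l))) ` Iset k)"
proof
  let ?SP = "fsv.span ((\<lambda>l. EF k a b h (G h (fst l) (snd l))) ` Iset k)"
  fix \<mu> assume "\<mu> \<in> Wtraces k a b h"
  then obtain w where mu: "\<mu> = Wtr a b h w" and w: "w \<in> Qk2 k" and cw: "\<forall>p \<in> square a b h. curl_v w p = 0"
    by (auto simp: Wtraces_def Wtr_def)
  obtain A where mA: "\<forall>i j. k < i \<or> k < j \<longrightarrow> A i j = 0"
    and fA0: "\<forall>x y. (fst \<circ> w) (x, y) = (\<Sum>i\<le>k. \<Sum>j\<le>k. A i j * (x - a) ^ i * (y - b) ^ j)"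
    using Qk_masked[of "fst \<circ> w" k a b] w by (auto simp: Qk2_def)
  obtain B where mB: "\<forall>i j. k < i \<or> k < j \<longrightarrow> B i j = 0"
    and fB0: "\<forall>x y. (snd \<circ> w) (x, y) = (\<Sum>i\<le>k. \<Sum>j\<le>k. B i j * (x - a) ^ i * (y - b) ^ j)"
    using Qk_masked[of "snd \<circ> w" k a b] w by (auto simp: Qk2_def)
  have fA: "\<forall>x y. fst (w (x, y)) = (\<Sum>i\<le>k. \<Sum>j\<le>k. A i j * (x - a) ^ i * (y - b) ^ j)" using fA0 by simp
  have fB: "\<forall>x y. snd (w (x, y)) = (\<Sum>i\<le>k. \<Sum>j\<le>k. B i j * (x - a) ^ i * (y - b) ^ j)" using fB0 by simp
  have R: "\<forall>i\<le>k. \<forall>j\<le>k. of_nat (Suc j) * A i (Suc j) = of_nat (Suc i) * B (Suc i) j"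
    by (rule curl_rel[OF h mA mB fA fB cw])
  define \<phi> where "\<phi> l = (if 1 \<le> fst l then A (fst l - 1) (snd l) / of_nat (fst l)
      else if 1 \<le> snd l then B 0 (snd l - 1) / of_nat (snd l) else 0)" for l :: "nat \<times> nat"
  define L' where "L' = {..Suc k} \<times> {..Suc k}"
  have finL: "finite L'" by (simp add: L'_def)
  have prodsum: "(\<Sum>l\<in>L'. f l) = (\<Sum>m\<le>Suc k. \<Sum>n\<le>Suc k. f (m, n))" for f :: "nat \<times> nat \<Rightarrow> real"
    unfolding L'_def by (rule sum.cartesian_product')
  have phiB: "\<phi> (m, Suc j) * of_nat (Suc j) = B m j" if "m \<le> Suc k" "j \<le> k" for m j
  proof (cases m)
    case 0 then show ?thesis by (simp add: \<phi>_def)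
  next
    case (Suc m')
    have "of_nat (Suc j) * A m' (Suc j) = of_nat (Suc m') * B (Suc m') j"
    proof (cases "m' \<le> k")
      case True then show ?thesis using R that by auto
    next
      case False then show ?thesis using mA mB by auto
    qed
    then show ?thesis using Suc by (simp add: \<phi>_def field_simps)
  qed
  have coef: "PW k h A B i j = (\<Sum>l\<in>L'. \<phi> l * G h (fst l) (snd l) i j)" if i: "i < 4" and j: "j \<le> k" for i j
  proof -
    have "i = 0 \<or> i = 1 \<or> i = 2 \<or> i = 3" using i by auto
    then show ?thesis
    proof (elim disjE)
      assume i0: "i = 0"
      have mem: "(Suc j, 0) \<in> L'" using j by (simp add: L'_def)
      have P: "\<forall>l\<in>L'. l \<noteq> (Suc j, 0) \<longrightarrow> \<phi> l * G h (fst l) (snd l) i j = 0"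
        using i0 by (auto simp: G_def)
      have "\<phi> (Suc j, 0) * G h (Suc j) 0 i j = - A j 0"
        using i0 by (simp add: G_def \<phi>_def del: of_nat_Suc)
      then show ?thesis using sum_single[OF finL mem P] i0 by (simp add: PW_def)
    next
      assume i3: "i = 3"
      have mem: "(0, Suc j) \<in> L'" using j by (simp add: L'_def)
      have P: "\<forall>l\<in>L'. l \<noteq> (0, Suc j) \<longrightarrow> \<phi> l * G h (fst l) (snd l) i j = 0"
        using i3 by (auto simp: G_def)
      have "\<phi> (0, Suc j) * G h 0 (Suc j) i j = B 0 j"
        using i3 by (simp add: G_def \<phi>_def del: of_nat_Suc)
      then show ?thesis using sum_single[OF finL mem P] i3 by (simp add: PW_def)
    next
      assume i2: "i = 2"
      have "(\<Sum>l\<in>L'. \<phi> l * G h (fst l) (snd l) i j) =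
          (\<Sum>m\<le>Suc k. \<Sum>n\<le>Suc k. \<phi> (m, n) * G h m n i j)" by (simp add: prodsum)
      also have "\<dots> = (\<Sum>m\<le>Suc k. if m = Suc j then (\<Sum>n\<le>Suc k. A j n * h ^ n) else 0)"
      proof (rule sum.cong[OF refl])
        fix m assume "m \<in> {..Suc k}"
        show "(\<Sum>n\<le>Suc k. \<phi> (m, n) * G h m n i j) = (if m = Suc j then (\<Sum>n\<le>Suc k. A j n * h ^ n) else 0)"
          by (cases "m = Suc j") (auto simp: G_def i2 \<phi>_def intro!: sum.cong)
      qed
      also have "\<dots> = (\<Sum>n\<le>Suc k. A j n * h ^ n)" using j by (simp add: sum.delta)
      also have "\<dots> = (\<Sum>n\<le>k. A j n * h ^ n)" using mA by simp
      finally show ?thesis by (simp add: PW_def i2)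
    next
      assume i1: "i = 1"
      have "(\<Sum>l\<in>L'. \<phi> l * G h (fst l) (snd l) i j) =
          (\<Sum>m\<le>Suc k. \<Sum>n\<le>Suc k. \<phi> (m, n) * G h m n i j)" by (simp add: prodsum)
      also have "\<dots> = (\<Sum>m\<le>Suc k. - (B m j * h ^ m))"
      proof (rule sum.cong[OF refl])
        fix m assume m: "m \<in> {..Suc k}"
        have "(\<Sum>n\<le>Suc k. \<phi> (m, n) * G h m n i j) = (\<Sum>n\<le>Suc k. if n = Suc j then - (\<phi> (m, Suc j) * of_nat (Suc j) * h ^ m) else 0)"
          by (rule sum.cong) (auto simp: G_def i1)
        also have "\<dots> = - (\<phi> (m, Suc j) * of_nat (Suc j) * h ^ m)" using j by (simp add: sum.delta)
        also have "\<dots> = - (B m j * h ^ m)" using phiB[of m j] m j by simp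
        finally show "(\<Sum>n\<le>Suc k. \<phi> (m, n) * G h m n i j) = - (B m j * h ^ m)" .
      qed
      also have "\<dots> = - (\<Sum>m\<le>k. B m j * h ^ m)" using mB by (simp add: sum_negf)
      finally show ?thesis by (simp add: PW_def i1)
    qed
  qed
  have "\<mu> = EF k a b h (PW k h A B)" using mu Wtr_rep[OF fA fB] by simp
  also have "\<dots> = EF k a b h (\<lambda>i j. \<Sum>l\<in>L'. \<phi> l * G h (fst l) (snd l) i j)"
    by (rule EF_cong) (simp add: coef)
  also have "\<dots> = (\<Sum>l\<in>L'. fscale (\<phi> l) (EF k a b h (G h (fst l) (snd l))))"
    by (rule EF_lin[OF finL])
  also have "\<dots> \<in> ?SP"
  proof (rule fsv.span_sum)
    fix l assume l: "l \<in> L'"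
    obtain m n where mn: "l = (m, n)" by fastforce
    have b: "m \<le> Suc k" "n \<le> Suc k" using l mn by (auto simp: L'_def)
    show "fscale (\<phi> l) (EF k a b h (G h (fst l) (snd l))) \<in> ?SP"
    proof (cases "\<phi> l = 0")
      case True
      have "fscale (\<phi> l) (EF k a b h (G h (fst l) (snd l))) = 0"
        using True by (simp add: fscale_def fun_eq_iff)
      then show ?thesis by (metis fsv.span_zero)
    next
      case False
      have "EF k a b h (G h m n) \<in> ?SP"
      proof -
        consider "(m, n) \<in> Iset k" | "m = 0 \<and> n = 0" | "2 \<le> m \<and> m \<le> k \<and> 2 \<le> n \<and> n \<le> k"
          | "1 \<le> m \<and> n = Suc k" | "m = Suc k \<and> 1 \<le> n \<and> n \<le> k"
        proof -
          have "((n = 0 \<and> 1 \<le> m \<and> m \<le> Suc k) \<or> (m = 0 \<and> 1 \<le> n \<and> n \<le> Suc k)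
                    \<or> (n = 1 \<and> 1 \<le> m \<and> m \<le> k) \<or> (m = 1 \<and> 2 \<le> n \<and> n \<le> k)) \<or> (m = 0 \<and> n = 0)
               \<or> (2 \<le> m \<and> m \<le> k \<and> 2 \<le> n \<and> n \<le> k) \<or> (1 \<le> m \<and> n = Suc k) \<or> (m = Suc k \<and> 1 \<le> n \<and> n \<le> k)"
            using b by presburger
          then show "((m, n) \<in> Iset k \<Longrightarrow> thesis) \<Longrightarrow> (m = 0 \<and> n = 0 \<Longrightarrow> thesis) \<Longrightarrow>
            (2 \<le> m \<and> m \<le> k \<and> 2 \<le> n \<and> n \<le> k \<Longrightarrow> thesis) \<Longrightarrow> (1 \<le> m \<and> n = Suc k \<Longrightarrow> thesis) \<Longrightarrow>
            (m = Suc k \<and> 1 \<le> n \<and> n \<le> k \<Longrightarrow> thesis) \<Longrightarrow> thesis"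
            unfolding Iset_def by blast
        qed
        then show ?thesis
        proof cases
          case 1 then show ?thesis by (intro fsv.span_base) force
        next
          case 2 then show ?thesis using EF_G00 by (simp add: fsv.span_zero)
        next
          case 3 then show ?thesis using EF_comb[OF h] by blast
        next
          case 4
          then have "\<phi> l = 0" using mn mA by (simp add: \<phi>_def)
          then show ?thesis using False by blast
        next
          case 5
          then have "of_nat (Suc (n - 1)) * A k (Suc (n - 1)) = of_nat (Suc k) * B (Suc k) (n - 1)"
            using R[rule_format, of k "n - 1"] by auto
          then have "A k n = 0" using 5 mB by simp
          then have "\<phi> l = 0" using mn 5 by (simp add: \<phi>_def)
          then show ?thesis using False by blast
        qed
      qed
      then show ?thesis using mn by (simp add: fsv.span_scale)
    qed
  qed
  finally show "\<mu> \<in> ?SP" .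
qed

lemma dim_W:
  assumes h: "h > 0" and k: "k \<ge> 1"
  shows "fdim (Wtraces k a b h) = 4 * k + 1"
proof -
  have "fdim (Wtraces k a b h) = card (Iset k)"
    by (rule dim_EF2[OF h Iset_finite Iset_indep[OF h k] W_sub[OF k] W_span[OF h k]])
  then show ?thesis using card_Iset[OF k] by simp
qed

theorem lemma5p8:
  fixes a b h :: real and k :: nat
  assumes "h > 0" and "k \<ge> 1"
  shows "I_M k a b h = 2"
  using dim_M[OF assms(1), of k a b] dim_V[OF assms(1), of k a b] dim_W[OF assms]
  by (simp add: I_M_def)

end
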